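(* Let $G=(V,E)$ be a finite graph, $p_e\in(0,1)$ and $x_e>0$ for each $e\in E$. Let $\Omega=\{0,1\}^E$, $\Sigma\subset\Omega$, $f:\Omega\to2^\Sigma$, $f(\omega)=\Sigma^\uparrow(\omega):=\{\eta\in\Sigma\mid\eta\supset\omega\}$, and $$\rho[\omega]=\mathbb{P}_p[\omega]\ (\omega\in\Omega),\qquad\gamma[\eta]=\mathbb{P}_{\frac{x(1-p)}{1+x(1-p)}}[\eta\mid\Sigma]\propto\prod_{e\in\eta}x_e(1-p_e)\ (\eta\in\Sigma).$$ Let $\mathscr{P}$ be the probability measure on $\Omega\times\Sigma$ with $\mathscr{P}[\omega,\eta]\propto\rho[\omega]\gamma[\eta]\mathbf{1}[\eta\in f(\omega)]$. Then: (a) The marginal on $\Sigma$ satisfies $\mathscr{P}_\Sigma[\eta]\propto\prod_{e\in\eta}x_e$. For each $\omega$ with $\mathscr{P}_\Omega[\omega]\neq0$, $\mathscr{P}[\cdot\mid\omega]=\mathbb{P}_{\frac{x(1-p)}{1+x(1-p)}}[\cdot\mid\Sigma^\uparrow(\omega)]$. (b) The marginal on $\Omega$ is $\mathscr{P}_\Omega=\mathscr{P}_\Sigma\cap\mathbb{P}_p$. For each $\eta\in\Sigma$ with $\mathscr{P}_\Sigma[\eta]\neq0$, $\mathscr{P}[\cdot\mid\eta]=\mathbb{P}_p\cap\delta_\eta=\mathbb{P}_{\eta,p}$.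
   Context: Elements of $\{0,1\}^E$ are identified with subsets of $E$. For $r\in[0,1]^E$, $\mathbb{P}_r$ is Bernoulli percolation (edge $e$ open independently with probability $r_e$); vector operations such as $\frac{x(1-p)}{1+x(1-p)}$ are coordinatewise. $\mathbb{P}_{\eta,p}$ is Bernoulli percolation with parameters $p$ on the edges of $\eta$ with all edges outside $\eta$ closed. $\delta_\eta$ is the Dirac mass at $\eta$. For measures $\pi,\nu$ on $\{0,1\}^E$, $\pi\cap\nu$ is the law of the intersection of the open-edge sets of independent samples of $\pi$ and $\nu$. *)

theory Defs
  imports Main "HOL-Library.Library"
begin

text \<open>Configurations in \<open>{0,1}^E\<close> are identified with subsets of the finite edge set \<open>E\<close>.
  Probability measures on \<open>{0,1}^E\<close> are represented by their mass functions
  \<open>'e set \<Rightarrow> real\<close> (zero outside \<open>Pow E\<close>).\<close>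

definition perc :: "'e set \<Rightarrow> ('e \<Rightarrow> real) \<Rightarrow> 'e set \<Rightarrow> real" where
  "perc E r \<omega> = (if \<omega> \<subseteq> E then (\<Prod>e\<in>E. if e \<in> \<omega> then r e else 1 - r e) else 0)"

definition perc_on :: "'e set \<Rightarrow> 'e set \<Rightarrow> ('e \<Rightarrow> real) \<Rightarrow> 'e set \<Rightarrow> real" where
  "perc_on E \<eta> p = perc E (\<lambda>e. if e \<in> \<eta> then p e else 0)"

definition cond :: "('e set \<Rightarrow> real) \<Rightarrow> 'e set set \<Rightarrow> 'e set \<Rightarrow> real" where
  "cond \<mu> A \<omega> = (if \<omega> \<in> A then \<mu> \<omega> / (\<Sum>a\<in>A. \<mu> a) else 0)"

definition dirac :: "'e set \<Rightarrow> 'e set \<Rightarrow> real" where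
  "dirac \<eta> \<omega> = (if \<omega> = \<eta> then 1 else 0)"

definition inter_law :: "'e set \<Rightarrow> ('e set \<Rightarrow> real) \<Rightarrow> ('e set \<Rightarrow> real) \<Rightarrow> 'e set \<Rightarrow> real" where
  "inter_law E \<pi> \<nu> \<omega> = (\<Sum>(a, b) \<in> Pow E \<times> Pow E. if a \<inter> b = \<omega> then \<pi> a * \<nu> b else 0)"

definition up_set :: "'e set set \<Rightarrow> 'e set \<Rightarrow> 'e set set" where
  "up_set \<Sigma> \<omega> = {\<eta> \<in> \<Sigma>. \<omega> \<subseteq> \<eta>}"

definition qpar :: "('e \<Rightarrow> real) \<Rightarrow> ('e \<Rightarrow> real) \<Rightarrow> 'e \<Rightarrow> real" where
  "qpar p x e = x e * (1 - p e) / (1 + x e * (1 - p e))"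

definition rho :: "'e set \<Rightarrow> ('e \<Rightarrow> real) \<Rightarrow> 'e set \<Rightarrow> real" where
  "rho E p = perc E p"

definition gamma :: "'e set \<Rightarrow> ('e \<Rightarrow> real) \<Rightarrow> ('e \<Rightarrow> real) \<Rightarrow> 'e set set \<Rightarrow> 'e set \<Rightarrow> real" where
  "gamma E p x \<Sigma> = cond (perc E (qpar p x)) \<Sigma>"

definition joint_w :: "'e set \<Rightarrow> ('e \<Rightarrow> real) \<Rightarrow> ('e \<Rightarrow> real) \<Rightarrow> 'e set set \<Rightarrow> 'e set \<Rightarrow> 'e set \<Rightarrow> real" where
  "joint_w E p x \<Sigma> \<omega> \<eta> =
     (if \<omega> \<subseteq> E \<and> \<eta> \<in> up_set \<Sigma> \<omega> then rho E p \<omega> * gamma E p x \<Sigma> \<eta> else 0)"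

definition joint :: "'e set \<Rightarrow> ('e \<Rightarrow> real) \<Rightarrow> ('e \<Rightarrow> real) \<Rightarrow> 'e set set \<Rightarrow> 'e set \<Rightarrow> 'e set \<Rightarrow> real" where
  "joint E p x \<Sigma> \<omega> \<eta> = joint_w E p x \<Sigma> \<omega> \<eta> /
     (\<Sum>(a, b) \<in> Pow E \<times> \<Sigma>. joint_w E p x \<Sigma> a b)"

definition marg_Omega :: "'e set \<Rightarrow> ('e \<Rightarrow> real) \<Rightarrow> ('e \<Rightarrow> real) \<Rightarrow> 'e set set \<Rightarrow> 'e set \<Rightarrow> real" where
  "marg_Omega E p x \<Sigma> \<omega> = (\<Sum>\<eta>\<in>\<Sigma>. joint E p x \<Sigma> \<omega> \<eta>)"

definition marg_Sigma :: "'e set \<Rightarrow> ('e \<Rightarrow> real) \<Rightarrow> ('e \<Rightarrow> real) \<Rightarrow> 'e set set \<Rightarrow> 'e set \<Rightarrow> real" where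
  "marg_Sigma E p x \<Sigma> \<eta> = (\<Sum>\<omega>\<in>Pow E. joint E p x \<Sigma> \<omega> \<eta>)"

end

theory Submission
  imports Defs
begin

lemma perc_split:
  assumes "finite E" "b \<subseteq> E"
  shows "perc E r b = prod r b * (\<Prod>e\<in>E-b. 1 - r e)"
proof -
  have "perc E r b = (\<Prod>e\<in>E. if e \<in> b then r e else 1 - r e)" using assms by (simp add: perc_def)
  also have "\<dots> = (\<Prod>e\<in>E-b. if e \<in> b then r e else 1 - r e) * (\<Prod>e\<in>b. if e \<in> b then r e else 1 - r e)"
    using assms by (simp add: prod.subset_diff)
  also have "(\<Prod>e\<in>E-b. if e \<in> b then r e else 1 - r e) = (\<Prod>e\<in>E-b. 1 - r e)" by (rule prod.cong) auto
  also have "(\<Prod>e\<in>b. if e \<in> b then r e else 1 - r e) = prod r b" by (rule prod.cong) auto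
  finally show ?thesis by simp
qed

lemma sum_one:
  fixes r :: "'e \<Rightarrow> real"
  assumes "finite C"
  shows "(\<Sum>S\<in>Pow C. prod r S * (\<Prod>e\<in>C-S. 1 - r e)) = 1"
proof -
  have "(\<Prod>e\<in>C. r e + (1 - r e)) = (\<Sum>S\<in>Pow C. prod r S * (\<Prod>e\<in>C-S. 1 - r e))"
    by (rule prod_add[OF assms])
  then show ?thesis by simp
qed

lemma keysum:
  fixes r :: "'e \<Rightarrow> real"
  assumes fin: "finite E" and AE: "A \<subseteq> E" and BE: "B \<subseteq> E" and AB: "A \<inter> B = {}"
  shows "(\<Sum>b\<in>{b\<in>Pow E. A \<subseteq> b \<and> b \<inter> B = {}}. perc E r b) = prod r A * (\<Prod>e\<in>B. 1 - r e)"
proof -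
  define C where "C = E - A - B"
  have finC: "finite C" using fin C_def by simp
  have set: "{b\<in>Pow E. A \<subseteq> b \<and> b \<inter> B = {}} = (\<lambda>S. A \<union> S) ` Pow C"
  proof (rule set_eqI, rule iffI)
    fix b assume "b \<in> {b\<in>Pow E. A \<subseteq> b \<and> b \<inter> B = {}}"
    then have "b = A \<union> (b - A) \<and> b - A \<in> Pow C" unfolding C_def by auto
    then show "b \<in> (\<lambda>S. A \<union> S) ` Pow C" by blast
  next
    fix b assume "b \<in> (\<lambda>S. A \<union> S) ` Pow C"
    then show "b \<in> {b\<in>Pow E. A \<subseteq> b \<and> b \<inter> B = {}}" using AE AB unfolding C_def by auto
  qed
  have inj: "inj_on (\<lambda>S. A \<union> S) (Pow C)"
    unfolding inj_on_def C_def by blast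
  have termeq: "perc E r (A \<union> S) = (prod r A * (\<Prod>e\<in>B. 1 - r e)) * (prod r S * (\<Prod>e\<in>C-S. 1 - r e))"
    if S: "S \<in> Pow C" for S
  proof -
    have SC: "S \<subseteq> C" using S by simp
    have fS: "finite S" "finite A" "finite B" "finite (C - S)"
      using SC finC fin AE BE finite_subset by auto
    have d1: "A \<inter> S = {}" using SC C_def by auto
    have e2: "E - (A \<union> S) = B \<union> (C - S)" using SC C_def BE AB by auto
    have d2: "B \<inter> (C - S) = {}" using C_def by auto
    have "perc E r (A \<union> S) = prod r (A \<union> S) * (\<Prod>e\<in>E - (A \<union> S). 1 - r e)"
      using SC AE C_def by (intro perc_split[OF fin]) auto
    also have "prod r (A \<union> S) = prod r A * prod r S" using prod.union_disjoint[OF fS(2) fS(1) d1] .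
    also have "(\<Prod>e\<in>E - (A \<union> S). 1 - r e) = (\<Prod>e\<in>B. 1 - r e) * (\<Prod>e\<in>C - S. 1 - r e)"
      unfolding e2 using prod.union_disjoint[OF fS(3) fS(4) d2] .
    finally show ?thesis by (simp add: ac_simps)
  qed
  have "(\<Sum>b\<in>{b\<in>Pow E. A \<subseteq> b \<and> b \<inter> B = {}}. perc E r b) = (\<Sum>S\<in>Pow C. perc E r (A \<union> S))"
    unfolding set by (simp add: sum.reindex[OF inj])
  also have "\<dots> = (\<Sum>S\<in>Pow C. (prod r A * (\<Prod>e\<in>B. 1 - r e)) * (prod r S * (\<Prod>e\<in>C-S. 1 - r e)))"
    using termeq by (rule sum.cong[OF refl])
  also have "\<dots> = prod r A * (\<Prod>e\<in>B. 1 - r e)"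
    by (simp add: sum_distrib_left[symmetric] sum_one[OF finC])
  finally show ?thesis .
qed

lemma keysum1:
  fixes r :: "'e \<Rightarrow> real"
  assumes fin: "finite E" and "\<eta> \<subseteq> E"
  shows "(\<Sum>b\<in>{b\<in>Pow E. b \<subseteq> \<eta>}. perc E r b) = (\<Prod>e\<in>E-\<eta>. 1 - r e)"
proof -
  have "{b\<in>Pow E. b \<subseteq> \<eta>} = {b\<in>Pow E. {} \<subseteq> b \<and> b \<inter> (E - \<eta>) = {}}" by auto
  then show ?thesis using keysum[OF fin, of "{}" "E - \<eta>" r] by simp
qed

lemma keysum2:
  fixes r :: "'e \<Rightarrow> real"
  assumes fin: "finite E" and "\<eta> \<subseteq> E" "\<omega> \<subseteq> \<eta>"
  shows "(\<Sum>b\<in>{b\<in>Pow E. b \<inter> \<eta> = \<omega>}. perc E r b) = prod r \<omega> * (\<Prod>e\<in>\<eta>-\<omega>. 1 - r e)"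
proof -
  have "{b\<in>Pow E. b \<inter> \<eta> = \<omega>} = {b\<in>Pow E. \<omega> \<subseteq> b \<and> b \<inter> (\<eta> - \<omega>) = {}}" using assms by auto
  then show ?thesis using keysum[OF fin, of \<omega> "\<eta> - \<omega>" r] assms by auto
qed

lemma perc_iii:
  fixes r :: "'e \<Rightarrow> real"
  assumes fin: "finite E" and "\<omega> \<subseteq> a" "a \<subseteq> E"
  shows "prod r \<omega> * (\<Prod>e\<in>a-\<omega>. 1 - r e) * (\<Prod>e\<in>E-a. 1 - r e) = perc E r \<omega>"
proof -
  have e: "E - \<omega> = (a - \<omega>) \<union> (E - a)" using assms by auto
  have f: "finite (a - \<omega>)" "finite (E - a)" using assms by (auto intro: finite_subset)
  have "perc E r \<omega> = prod r \<omega> * (\<Prod>e\<in>E-\<omega>. 1 - r e)" using assms by (intro perc_split) auto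
  also have "(\<Prod>e\<in>E-\<omega>. 1 - r e) = (\<Prod>e\<in>a-\<omega>. 1 - r e) * (\<Prod>e\<in>E-a. 1 - r e)"
    unfolding e by (rule prod.union_disjoint[OF f]) auto
  finally show ?thesis by (simp add: mult_ac)
qed

lemma perc_pos:
  fixes r :: "'e \<Rightarrow> real"
  assumes "finite E" "\<forall>e\<in>E. 0 < r e \<and> r e < 1" "b \<subseteq> E"
  shows "perc E r b > 0"
  using assms unfolding perc_def by (auto intro!: prod_pos)

theorem proposition3p5:
  fixes E :: "'e set" and p x :: "'e \<Rightarrow> real" and \<Sigma> :: "'e set set"
  assumes "finite E"
    and "\<forall>e\<in>E. 0 < p e \<and> p e < 1"
    and "\<forall>e\<in>E. 0 < x e"
    and "\<Sigma> \<subseteq> Pow E" and "\<Sigma> \<noteq> {}"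
  shows
    "(\<forall>\<eta>. marg_Sigma E p x \<Sigma> \<eta> =
        (if \<eta> \<in> \<Sigma> then (\<Prod>e\<in>\<eta>. x e) / (\<Sum>\<eta>'\<in>\<Sigma>. \<Prod>e\<in>\<eta>'. x e) else 0))
   \<and> (\<forall>\<omega>. marg_Omega E p x \<Sigma> \<omega> \<noteq> 0 \<longrightarrow>
        (\<forall>\<eta>. joint E p x \<Sigma> \<omega> \<eta> / marg_Omega E p x \<Sigma> \<omega>
              = cond (perc E (qpar p x)) (up_set \<Sigma> \<omega>) \<eta>))
   \<and> (\<forall>\<omega>. marg_Omega E p x \<Sigma> \<omega> = inter_law E (marg_Sigma E p x \<Sigma>) (perc E p) \<omega>)
   \<and> (\<forall>\<eta>\<in>\<Sigma>. marg_Sigma E p x \<Sigma> \<eta> \<noteq> 0 \<longrightarrow>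
        (\<forall>\<omega>. joint E p x \<Sigma> \<omega> \<eta> / marg_Sigma E p x \<Sigma> \<eta> = inter_law E (perc E p) (dirac \<eta>) \<omega>
            \<and> joint E p x \<Sigma> \<omega> \<eta> / marg_Sigma E p x \<Sigma> \<eta> = perc_on E \<eta> p \<omega>))"
proof -
  note fin = assms(1) and p01 = assms(2) and xpos = assms(3) and SE = assms(4) and Sne = assms(5)
  define q where "q = qpar p x"
  have q01: "\<forall>e\<in>E. 0 < q e \<and> q e < 1"
  proof
    fix e assume e: "e \<in> E"
    have a: "0 < x e * (1 - p e)" using p01 xpos e by simp
    then show "0 < q e \<and> q e < 1" unfolding q_def qpar_def by (simp add: field_simps)
  qed
  have qeq: "q e = x e * ((1 - p e) * (1 - q e))" if e: "e \<in> E" for e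
  proof -
    have a: "0 < x e * (1 - p e)" using p01 xpos e by simp
    then show ?thesis unfolding q_def qpar_def by (simp add: field_simps)
  qed
  have finS: "finite \<Sigma>" using SE fin by (meson finite_Pow_iff finite_subset)
  define Zq where "Zq = sum (perc E q) \<Sigma>"
  have Zq: "Zq > 0" unfolding Zq_def
    using finS Sne SE perc_pos[OF fin q01] by (intro sum_pos) auto
  define g where "g \<eta> = (if \<eta> \<in> \<Sigma> then perc E q \<eta> / Zq else 0)" for \<eta>
  have gpos: "g \<eta> > 0" if "\<eta> \<in> \<Sigma>" for \<eta>
    using that SE perc_pos[OF fin q01, of \<eta>] Zq unfolding g_def by auto
  define Pe where "Pe \<eta> = (\<Prod>e\<in>E-\<eta>. 1 - p e)" for \<eta>
  have Pepos: "Pe \<eta> > 0" for \<eta> unfolding Pe_def using p01 by (intro prod_pos) auto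
  have jw: "joint_w E p x \<Sigma> \<omega> \<eta> = (if \<eta> \<in> \<Sigma> \<and> \<omega> \<subseteq> \<eta> then perc E p \<omega> * g \<eta> else 0)" for \<omega> \<eta>
    using SE unfolding joint_w_def up_set_def rho_def gamma_def cond_def g_def Zq_def q_def by auto
  define W where "W = (\<Sum>(a, b) \<in> Pow E \<times> \<Sigma>. joint_w E p x \<Sigma> a b)"
  have j: "joint E p x \<Sigma> \<omega> \<eta> = joint_w E p x \<Sigma> \<omega> \<eta> / W" for \<omega> \<eta>
    unfolding joint_def W_def by simp
  have m: "(\<Sum>\<omega>\<in>Pow E. joint_w E p x \<Sigma> \<omega> \<eta>) = (if \<eta> \<in> \<Sigma> then g \<eta> * Pe \<eta> else 0)" for \<eta>
  proof (cases "\<eta> \<in> \<Sigma>")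
    case True
    have "(\<Sum>\<omega>\<in>Pow E. joint_w E p x \<Sigma> \<omega> \<eta>) = (\<Sum>\<omega>\<in>Pow E. if \<omega> \<subseteq> \<eta> then perc E p \<omega> * g \<eta> else 0)"
      using True by (simp add: jw)
    also have "\<dots> = (\<Sum>\<omega>\<in>{\<omega>\<in>Pow E. \<omega> \<subseteq> \<eta>}. perc E p \<omega> * g \<eta>)"
      using fin by (intro sum.inter_filter[symmetric]) simp
    also have "\<dots> = g \<eta> * Pe \<eta>"
      using keysum1[OF fin, of \<eta> p] True SE unfolding Pe_def
      by (auto simp: sum_distrib_right[symmetric])
    finally show ?thesis using True by simp
  qed (simp add: jw)
  have Wsum: "W = (\<Sum>\<eta>\<in>\<Sigma>. g \<eta> * Pe \<eta>)"
  proof -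
    have "W = (\<Sum>a\<in>Pow E. \<Sum>b\<in>\<Sigma>. joint_w E p x \<Sigma> a b)"
      unfolding W_def by (simp add: sum.cartesian_product)
    also have "\<dots> = (\<Sum>b\<in>\<Sigma>. \<Sum>a\<in>Pow E. joint_w E p x \<Sigma> a b)" by (rule sum.swap)
    also have "\<dots> = (\<Sum>\<eta>\<in>\<Sigma>. g \<eta> * Pe \<eta>)" using m by simp
    finally show ?thesis .
  qed
  define K0 where "K0 = (\<Prod>e\<in>E. (1 - q e) * (1 - p e))"
  have K0: "K0 > 0" unfolding K0_def using p01 q01 by (intro prod_pos) auto
  have gP: "g \<eta> * Pe \<eta> = K0 / Zq * prod x \<eta>" if "\<eta> \<in> \<Sigma>" for \<eta>
  proof -
    have eE: "\<eta> \<subseteq> E" using that SE by auto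
    have f: "finite \<eta>" using eE fin finite_subset by auto
    have "prod q \<eta> = prod x \<eta> * (\<Prod>e\<in>\<eta>. (1 - p e) * (1 - q e))"
      using qeq eE by (simp add: prod.distrib[symmetric] cong: prod.cong) (rule prod.cong, auto)
    moreover have "perc E q \<eta> = prod q \<eta> * (\<Prod>e\<in>E-\<eta>. 1 - q e)" by (rule perc_split[OF fin eE])
    moreover have "K0 = (\<Prod>e\<in>E-\<eta>. (1 - q e) * (1 - p e)) * (\<Prod>e\<in>\<eta>. (1 - q e) * (1 - p e))"
      unfolding K0_def using fin eE by (simp add: prod.subset_diff)
    ultimately show ?thesis using that unfolding g_def Pe_def
      by (simp add: prod.distrib mult_ac)
  qed
  have Wv: "W = K0 / Zq * (\<Sum>\<eta>'\<in>\<Sigma>. \<Prod>e\<in>\<eta>'. x e)"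
    unfolding Wsum by (simp add: gP sum_distrib_left)
  have Sx: "(\<Sum>\<eta>'\<in>\<Sigma>. \<Prod>e\<in>\<eta>'. x e) > 0"
    using finS Sne SE xpos by (intro sum_pos prod_pos) auto
  have Wpos: "W > 0" unfolding Wv using K0 Zq Sx by simp
  have mS: "marg_Sigma E p x \<Sigma> \<eta> = (if \<eta> \<in> \<Sigma> then g \<eta> * Pe \<eta> / W else 0)" for \<eta>
    unfolding marg_Sigma_def j sum_divide_distrib[symmetric] m by simp
  have A: "\<forall>\<eta>. marg_Sigma E p x \<Sigma> \<eta> =
        (if \<eta> \<in> \<Sigma> then (\<Prod>e\<in>\<eta>. x e) / (\<Sum>\<eta>'\<in>\<Sigma>. \<Prod>e\<in>\<eta>'. x e) else 0)"
    using K0 Zq by (simp add: mS gP Wv)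

  have B: "\<forall>\<omega>. marg_Omega E p x \<Sigma> \<omega> \<noteq> 0 \<longrightarrow>
        (\<forall>\<eta>. joint E p x \<Sigma> \<omega> \<eta> / marg_Omega E p x \<Sigma> \<omega>
              = cond (perc E (qpar p x)) (up_set \<Sigma> \<omega>) \<eta>)"
  proof (intro allI impI)
    fix \<omega> \<eta> assume nz: "marg_Omega E p x \<Sigma> \<omega> \<noteq> 0"
    define Su where "Su = sum (perc E q) (up_set \<Sigma> \<omega>)"
    have upS: "up_set \<Sigma> \<omega> = {\<eta>\<in>\<Sigma>. \<omega> \<subseteq> \<eta>}" unfolding up_set_def by simp
    have "(\<Sum>\<eta>\<in>\<Sigma>. joint_w E p x \<Sigma> \<omega> \<eta>) = (\<Sum>\<eta>\<in>\<Sigma>. if \<omega> \<subseteq> \<eta> then perc E p \<omega> * g \<eta> else 0)"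
      by (rule sum.cong) (auto simp: jw)
    also have "\<dots> = (\<Sum>\<eta>\<in>up_set \<Sigma> \<omega>. perc E p \<omega> * g \<eta>)"
      unfolding upS using finS by (intro sum.inter_filter[symmetric]) simp
    also have "\<dots> = perc E p \<omega> * (\<Sum>\<eta>\<in>up_set \<Sigma> \<omega>. perc E q \<eta> / Zq)"
      by (simp add: sum_distrib_left g_def upS)
    also have "\<dots> = perc E p \<omega> * (Su / Zq)" unfolding Su_def by (simp add: sum_divide_distrib)
    finally have mO: "marg_Omega E p x \<Sigma> \<omega> = perc E p \<omega> * (Su / Zq) / W"
      unfolding marg_Omega_def j sum_divide_distrib[symmetric] by simp
    have n1: "perc E p \<omega> \<noteq> 0" "Su \<noteq> 0" using nz mO by auto
    show "joint E p x \<Sigma> \<omega> \<eta> / marg_Omega E p x \<Sigma> \<omega>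
              = cond (perc E (qpar p x)) (up_set \<Sigma> \<omega>) \<eta>"
    proof (cases "\<eta> \<in> up_set \<Sigma> \<omega>")
      case True
      then have "\<eta> \<in> \<Sigma>" "\<omega> \<subseteq> \<eta>" unfolding up_set_def by auto
      then show ?thesis using True n1 Zq Wpos
        unfolding j mO cond_def q_def[symmetric] Su_def[symmetric] by (simp add: jw g_def field_simps)
    next
      case False
      then have "joint_w E p x \<Sigma> \<omega> \<eta> = 0" unfolding jw up_set_def by auto
      then show ?thesis using False unfolding j cond_def by simp
    qed
  qed
  have C: "\<forall>\<omega>. marg_Omega E p x \<Sigma> \<omega> = inter_law E (marg_Sigma E p x \<Sigma>) (perc E p) \<omega>"
  proof
    fix \<omega>
    have t: "(\<Sum>b\<in>Pow E. if a \<inter> b = \<omega> then marg_Sigma E p x \<Sigma> a * perc E p b else 0) = joint E p x \<Sigma> \<omega> a"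
      if a: "a \<in> Pow E" for a
    proof -
      have "(\<Sum>b\<in>Pow E. if a \<inter> b = \<omega> then marg_Sigma E p x \<Sigma> a * perc E p b else 0)
          = (\<Sum>b\<in>{b\<in>Pow E. b \<inter> a = \<omega>}. marg_Sigma E p x \<Sigma> a * perc E p b)"
        using fin by (subst sum.inter_filter) (auto simp: Int_commute intro!: sum.cong)
      also have "\<dots> = marg_Sigma E p x \<Sigma> a * (\<Sum>b\<in>{b\<in>Pow E. b \<inter> a = \<omega>}. perc E p b)"
        by (simp add: sum_distrib_left)
      also have "\<dots> = joint E p x \<Sigma> \<omega> a"
      proof (cases "a \<in> \<Sigma> \<and> \<omega> \<subseteq> a")
        case True
        have "(\<Sum>b\<in>{b\<in>Pow E. b \<inter> a = \<omega>}. perc E p b) = prod p \<omega> * (\<Prod>e\<in>a-\<omega>. 1 - p e)"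
          using True a by (intro keysum2[OF fin]) auto
        moreover have "prod p \<omega> * (\<Prod>e\<in>a-\<omega>. 1 - p e) * Pe a = perc E p \<omega>"
          unfolding Pe_def using True a by (intro perc_iii[OF fin]) auto
        ultimately show ?thesis using True unfolding mS j jw
          by (simp add: field_simps)
      next
        case False
        then show ?thesis
        proof (cases "a \<in> \<Sigma>")
          case True
          then have em: "{b\<in>Pow E. b \<inter> a = \<omega>} = {}" using False by auto
          have z: "joint E p x \<Sigma> \<omega> a = 0" using False by (auto simp: j jw)
          show ?thesis unfolding z em by simp
        next
          case False
          then show ?thesis unfolding j jw mS by simp
        qed
      qed
      finally show ?thesis .
    qed
    have "inter_law E (marg_Sigma E p x \<Sigma>) (perc E p) \<omega>
        = (\<Sum>a\<in>Pow E. \<Sum>b\<in>Pow E. if a \<inter> b = \<omega> then marg_Sigma E p x \<Sigma> a * perc E p b else 0)"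
      unfolding inter_law_def by (simp add: sum.cartesian_product)
    also have "\<dots> = (\<Sum>a\<in>Pow E. joint E p x \<Sigma> \<omega> a)" using t by simp
    also have "\<dots> = (\<Sum>a\<in>\<Sigma>. joint E p x \<Sigma> \<omega> a)"
      using fin SE by (intro sum.mono_neutral_right) (auto simp: j jw)
    finally show "marg_Omega E p x \<Sigma> \<omega> = inter_law E (marg_Sigma E p x \<Sigma>) (perc E p) \<omega>"
      unfolding marg_Omega_def by simp
  qed
  have D: "\<forall>\<eta>\<in>\<Sigma>. marg_Sigma E p x \<Sigma> \<eta> \<noteq> 0 \<longrightarrow>
        (\<forall>\<omega>. joint E p x \<Sigma> \<omega> \<eta> / marg_Sigma E p x \<Sigma> \<eta> = inter_law E (perc E p) (dirac \<eta>) \<omega>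
            \<and> joint E p x \<Sigma> \<omega> \<eta> / marg_Sigma E p x \<Sigma> \<eta> = perc_on E \<eta> p \<omega>)"
  proof (intro ballI impI allI)
    fix \<eta> \<omega> assume eS: "\<eta> \<in> \<Sigma>" and nz: "marg_Sigma E p x \<Sigma> \<eta> \<noteq> 0"
    have eE: "\<eta> \<subseteq> E" using eS SE by auto
    define h where "h = (if \<omega> \<subseteq> \<eta> then prod p \<omega> * (\<Prod>e\<in>\<eta>-\<omega>. 1 - p e) else 0)"
    have h1: "joint E p x \<Sigma> \<omega> \<eta> / marg_Sigma E p x \<Sigma> \<eta> = h"
    proof (cases "\<omega> \<subseteq> \<eta>")
      case True
      have "prod p \<omega> * (\<Prod>e\<in>\<eta>-\<omega>. 1 - p e) * Pe \<eta> = perc E p \<omega>"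
        unfolding Pe_def using True eE by (intro perc_iii[OF fin]) auto
      then show ?thesis using True eS gpos[OF eS] Pepos[of \<eta>] Wpos unfolding h_def j jw mS
        by (simp add: field_simps)
    qed (simp add: h_def j jw)
    have h2: "inter_law E (perc E p) (dirac \<eta>) \<omega> = h"
    proof -
      have "inter_law E (perc E p) (dirac \<eta>) \<omega>
        = (\<Sum>a\<in>Pow E. \<Sum>b\<in>Pow E. if b = \<eta> then (if a \<inter> \<eta> = \<omega> then perc E p a else 0) else 0)"
        unfolding inter_law_def sum.cartesian_product[symmetric] by (intro sum.cong refl) (auto simp: dirac_def)
      also have "\<dots> = (\<Sum>a\<in>Pow E. if a \<inter> \<eta> = \<omega> then perc E p a else 0)"
        using fin eE by simp
      also have "\<dots> = (\<Sum>a\<in>{a\<in>Pow E. a \<inter> \<eta> = \<omega>}. perc E p a)"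
        using fin by (intro sum.inter_filter[symmetric]) simp
      also have "\<dots> = h"
      proof (cases "\<omega> \<subseteq> \<eta>")
        case True
        then show ?thesis unfolding h_def using keysum2[OF fin eE True] by simp
      next
        case False
        then have em: "{a\<in>Pow E. a \<inter> \<eta> = \<omega>} = {}" by auto
        show ?thesis using False unfolding h_def em by simp
      qed
      finally show ?thesis .
    qed
    have h3: "perc_on E \<eta> p \<omega> = h"
    proof (cases "\<omega> \<subseteq> \<eta>")
      case True
      define p' where "p' = (\<lambda>e. if e \<in> \<eta> then p e else 0)"
      have "perc_on E \<eta> p \<omega> = prod p' \<omega> * (\<Prod>e\<in>\<eta>-\<omega>. 1 - p' e) * (\<Prod>e\<in>E-\<eta>. 1 - p' e)"
        unfolding perc_on_def p'_def[symmetric] using True eE by (intro perc_iii[OF fin, symmetric])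
      also have "prod p' \<omega> = prod p \<omega>" using True unfolding p'_def by (intro prod.cong) auto
      also have "(\<Prod>e\<in>\<eta>-\<omega>. 1 - p' e) = (\<Prod>e\<in>\<eta>-\<omega>. 1 - p e)" unfolding p'_def by (intro prod.cong) auto
      also have "(\<Prod>e\<in>E-\<eta>. 1 - p' e) = 1" unfolding p'_def by (intro prod.neutral) auto
      finally show ?thesis using True unfolding h_def by simp
    next
      case False
      then obtain e where e: "e \<in> \<omega>" "e \<notin> \<eta>" by auto
      show ?thesis
      proof (cases "\<omega> \<subseteq> E")
        case True
        then have "e \<in> E" using e by auto
        then have "(\<Prod>e\<in>E. if e \<in> \<omega> then (if e \<in> \<eta> then p e else 0) else 1 - (if e \<in> \<eta> then p e else 0)) = 0"
          using fin e by (intro prod_zero) auto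
        then show ?thesis using True False unfolding perc_on_def perc_def h_def by simp
      next
        case False
        then show ?thesis using \<open>\<not> \<omega> \<subseteq> \<eta>\<close> unfolding perc_on_def perc_def h_def by simp
      qed
    qed
    show "joint E p x \<Sigma> \<omega> \<eta> / marg_Sigma E p x \<Sigma> \<eta> = inter_law E (perc E p) (dirac \<eta>) \<omega>
            \<and> joint E p x \<Sigma> \<omega> \<eta> / marg_Sigma E p x \<Sigma> \<eta> = perc_on E \<eta> p \<omega>"
      using h1 h2 h3 by simp
  qed
  show ?thesis using A B C D by blast
qed

end
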